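(* Let $P$ be a finite point set in general position and let $p\in P$ have degree exactly one in $G_\bigtriangledown(P)$. Suppose there are distinct $i,j\in\{1,2,3\}$ with $V_i(p)\neq\emptyset$ and $V_j(p)\neq\emptyset$, and let $k$ be the element of $\{1,2,3\}\setminus\{i,j\}$. Then $\overline{V}_k(p)\neq\emptyset$.
   Context: A finite point set $P$ in the plane is in general position if no line through two points of $P$ makes an angle of $0^\circ$, $60^\circ$ or $120^\circ$ with the horizontal. A down-triangle is an equilateral triangle with one side parallel to the $x$-axis and the corner opposite to this side below that side. $G_\bigtriangledown(P)$ is the graph with vertex set $P$ in which $p,q$ are adjacent iff some (closed) down-triangle contains $p$ and $q$ and no other point of $P$. For a point $p$, let $A_i(p)$ ($i=1,\dots,6$) be the closed cone with apex $p$ between the rays from $p$ at angles $(i-1)\pi/3$ and $i\pi/3$ measured counter-clockwise from the positive $x$-axis; $C_1(p)=A_1(p)$, $C_2(p)=A_3(p)$, $C_3(p)=A_5(p)$ and $\overline{C}_1(p)=A_4(p)$, $\overline{C}_2(p)=A_6(p)$, $\overline{C}_3(p)=A_2(p)$. For $i\in\{1,2,3\}$, $V_i(p)=\{p'\in P\setminus\{p\}: p'\in C_i(p)\}$ and $\overline{V}_i(p)=\{p'\in P\setminus\{p\}: p'\in\overline{C}_i(p)\}$. *)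

theory Defs
  imports "HOL-Analysis.Analysis"
begin

type_synonym point = "real \<times> real"

text \<open>General position: no line through two distinct points of P makes an angle of
0, 60 or 120 degrees with the horizontal.\<close>
definition general_position :: "point set \<Rightarrow> bool" where
  "general_position P \<longleftrightarrow>
     (\<forall>p\<in>P. \<forall>q\<in>P. p \<noteq> q \<longrightarrow>
        snd q - snd p \<noteq> 0 \<and>
        snd q - snd p \<noteq> sqrt 3 * (fst q - fst p) \<and>
        snd q - snd p \<noteq> - sqrt 3 * (fst q - fst p))"

definition down_triangle :: "point set \<Rightarrow> bool" where
  "down_triangle T \<longleftrightarrow>
     (\<exists>a b s. s > 0 \<and>
        T = convex hull {(a, b), (a + s, b), (a + s / 2, b - s * sqrt 3 / 2)})"

definition tri_adj :: "point set \<Rightarrow> point \<Rightarrow> point \<Rightarrow> bool" where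
  "tri_adj P p q \<longleftrightarrow> p \<in> P \<and> q \<in> P \<and> p \<noteq> q \<and>
     (\<exists>T. down_triangle T \<and> T \<inter> P = {p, q})"

definition tri_degree :: "point set \<Rightarrow> point \<Rightarrow> nat" where
  "tri_degree P p = card {q. tri_adj P p q}"

definition cone_A :: "nat \<Rightarrow> point \<Rightarrow> point set" where
  "cone_A i p = {(fst p + r * cos \<theta>, snd p + r * sin \<theta>) | r \<theta>.
       r \<ge> 0 \<and> (real i - 1) * pi / 3 \<le> \<theta> \<and> \<theta> \<le> real i * pi / 3}"

definition cone_C :: "nat \<Rightarrow> point \<Rightarrow> point set" where
  "cone_C i p = cone_A (2 * i - 1) p"

definition cone_Cbar :: "nat \<Rightarrow> point \<Rightarrow> point set" where
  "cone_Cbar i p = (if i = 3 then cone_A 2 p else cone_A (2 * i + 2) p)"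
  (* Cbar1 = A4, Cbar2 = A6, Cbar3 = A2 *)

definition V :: "point set \<Rightarrow> nat \<Rightarrow> point \<Rightarrow> point set" where
  "V P i p = {p' \<in> P - {p}. p' \<in> cone_C i p}"

definition Vbar :: "point set \<Rightarrow> nat \<Rightarrow> point \<Rightarrow> point set" where
  "Vbar P i p = {p' \<in> P - {p}. p' \<in> cone_Cbar i p}"

end

theory Submission imports Defs begin

definition F1 :: "point \<Rightarrow> real" where "F1 x = 2 * snd x"
definition F2 :: "point \<Rightarrow> real" where "F2 x = - (sqrt 3 * fst x + snd x)"
definition F3 :: "point \<Rightarrow> real" where "F3 x = sqrt 3 * fst x - snd x"

lemma s3: "sqrt 3 * sqrt 3 = (3::real)" by simp
lemma s3pos: "sqrt 3 > (0::real)" by simp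

lemma tri_eq:
  assumes s: "s > 0"
  shows "convex hull {(a, b), (a + s, b), (a + s / 2, b - s * sqrt 3 / 2)} =
    {x. F1 x \<le> 2*b \<and> F2 x \<le> -(sqrt 3 * a + b) \<and> F3 x \<le> sqrt 3 * (a+s) - b}"
proof (rule set_eqI, rule iffI)
  fix x assume "x \<in> convex hull {(a, b), (a + s, b), (a + s / 2, b - s * sqrt 3 / 2)}"
  then obtain u v w where uvw: "0 \<le> u" "0 \<le> v" "0 \<le> w" "u+v+w = 1"
    and x: "x = u *\<^sub>R (a,b) + v *\<^sub>R (a + s, b) + w *\<^sub>R (a + s / 2, b - s * sqrt 3 / 2)"
    unfolding convex_hull_3 by blast
  have u: "u = 1 - v - w" using uvw by simp
  have fx: "fst x = a + v * s + w * s/2" and sx: "snd x = b - w * s* sqrt 3/2"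
    using x unfolding u by (auto simp: algebra_simps)
  have e1: "F1 x = 2*b - sqrt 3 * (s * w)" unfolding F1_def sx by (simp add: algebra_simps)
  have e2: "F2 x = -(sqrt 3 * a + b) - sqrt 3 * (s * v)" unfolding F2_def fx sx by (simp add: algebra_simps)
  have e3: "F3 x = sqrt 3 * (a+s) - b - sqrt 3 * (s * (1 - v - w))"
    unfolding F3_def fx sx by (simp add: algebra_simps s3)
  have "0 \<le> sqrt 3 * (s * w)" "0 \<le> sqrt 3 * (s * v)" "0 \<le> sqrt 3 * (s * (1-v-w))"
    using uvw s by auto
  then show "x \<in> {x. F1 x \<le> 2*b \<and> F2 x \<le> -(sqrt 3 * a + b) \<and> F3 x \<le> sqrt 3 * (a+s) - b}"
    using e1 e2 e3 by simp
next
  fix x assume "x \<in> {x. F1 x \<le> 2*b \<and> F2 x \<le> -(sqrt 3 * a + b) \<and> F3 x \<le> sqrt 3 * (a+s) - b}"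
  then have h: "F1 x \<le> 2*b" "F2 x \<le> -(sqrt 3 * a + b)" "F3 x \<le> sqrt 3 * (a+s) - b" by auto
  define S where "S = sqrt 3 * s"
  have S: "S > 0" using s by (simp add: S_def)
  define wC where "wC = (2*b - F1 x)/S"
  define wB where "wB = (-(sqrt 3 * a + b) - F2 x)/S"
  define wA where "wA = (sqrt 3 * (a+s) - b - F3 x)/S"
  have nn: "0 \<le> wA" "0 \<le> wB" "0 \<le> wC" using h S unfolding wA_def wB_def wC_def by auto
  have sum0: "wA + wB + wC = ((sqrt 3 * (a+s) - b - F3 x) + (-(sqrt 3 * a + b) - F2 x) + (2*b - F1 x))/S"
    unfolding wA_def wB_def wC_def by (metis add_divide_distrib)
  have "(sqrt 3 * (a+s) - b - F3 x) + (-(sqrt 3 * a + b) - F2 x) + (2*b - F1 x) = S"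
    unfolding F1_def F2_def F3_def S_def by (simp add: algebra_simps)
  then have sum: "wA + wB + wC = 1" using sum0 S by simp
  have "x = wA *\<^sub>R (a,b) + wB *\<^sub>R (a + s, b) + wC *\<^sub>R (a + s / 2, b - s * sqrt 3 / 2)"
  proof (rule prod_eqI)
    show "fst x = fst (wA *\<^sub>R (a,b) + wB *\<^sub>R (a + s, b) + wC *\<^sub>R (a + s / 2, b - s * sqrt 3 / 2))"
      using S s unfolding wA_def wB_def wC_def F1_def F2_def F3_def S_def
      by (simp add: field_simps s3)
    show "snd x = snd (wA *\<^sub>R (a,b) + wB *\<^sub>R (a + s, b) + wC *\<^sub>R (a + s / 2, b - s * sqrt 3 / 2))"
      using S s unfolding wA_def wB_def wC_def F1_def F2_def F3_def S_def
      by (simp add: field_simps s3)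
  qed
  then show "x \<in> convex hull {(a, b), (a + s, b), (a + s / 2, b - s * sqrt 3 / 2)}"
    unfolding convex_hull_3 using nn sum by blast
qed


lemma sge1: "0 \<le> x \<Longrightarrow> x \<le> pi \<Longrightarrow> 0 \<le> sin x" by (rule sin_ge_zero)
lemma sle1: "-pi \<le> x \<Longrightarrow> x \<le> 0 \<Longrightarrow> sin x \<le> 0"
  using sin_ge_zero[of "-x"] by simp
lemma sle2: "pi \<le> x \<Longrightarrow> x \<le> 2*pi \<Longrightarrow> sin x \<le> 0"
  using sle1[of "x - 2*pi"] sin_periodic[of "x - 2*pi"] by simp
lemma sge2: "2*pi \<le> x \<Longrightarrow> x \<le> 3*pi \<Longrightarrow> 0 \<le> sin x"
  using sge1[of "x - 2*pi"] sin_periodic[of "x - 2*pi"] by simp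

lemma cone_polar:
  assumes "q \<in> cone_A m p"
  shows "\<exists>r \<theta>. r \<ge> 0 \<and> (real m - 1) * pi / 3 \<le> \<theta> \<and> \<theta> \<le> real m * pi / 3 \<and>
     snd q - snd p = r * sin \<theta> \<and>
     snd q - snd p + sqrt 3 * (fst q - fst p) = 2 * r * sin (\<theta> + pi/3) \<and>
     snd q - snd p - sqrt 3 * (fst q - fst p) = 2 * r * sin (\<theta> - pi/3)"
proof -
  obtain r \<theta> where h: "q = (fst p + r * cos \<theta>, snd p + r * sin \<theta>)" "r \<ge> 0"
    "(real m - 1) * pi / 3 \<le> \<theta>" "\<theta> \<le> real m * pi / 3"
    using assms unfolding cone_A_def by blast
  have "snd q - snd p + sqrt 3 * (fst q - fst p) = 2 * r * sin (\<theta> + pi/3)"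
    using h(1) by (simp add: sin_add sin_60 cos_60 algebra_simps)
  moreover have "snd q - snd p - sqrt 3 * (fst q - fst p) = 2 * r * sin (\<theta> - pi/3)"
    using h(1) by (simp add: sin_diff sin_60 cos_60 algebra_simps)
  ultimately show ?thesis using h by (intro exI[of _ r] exI[of _ \<theta>]) auto
qed

lemma mnn: "(r::real) \<ge> 0 \<Longrightarrow> 0 \<le> s \<Longrightarrow> 0 \<le> 2 * r * s" by simp
lemma mnp: "(r::real) \<ge> 0 \<Longrightarrow> s \<le> 0 \<Longrightarrow> 2 * r * s \<le> 0" by (simp add: mult_nonneg_nonpos)
lemma mnn1: "(r::real) \<ge> 0 \<Longrightarrow> 0 \<le> s \<Longrightarrow> 0 \<le> r * s" by simp
lemma mnp1: "(r::real) \<ge> 0 \<Longrightarrow> s \<le> 0 \<Longrightarrow> r * s \<le> 0" by (simp add: mult_nonneg_nonpos)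

definition du where "du p q = snd q - snd p"
definition dv where "dv p q = snd q - snd p + sqrt 3 * (fst q - fst p)"
definition dw where "dw p q = snd q - snd p - sqrt 3 * (fst q - fst p)"

lemma cone_signs:
  assumes "q \<in> cone_A m p"
  shows "(m = 1 \<longrightarrow> du p q \<ge> 0 \<and> dv p q \<ge> 0 \<and> dw p q \<le> 0) \<and>
         (m = 2 \<longrightarrow> du p q \<ge> 0 \<and> dv p q \<ge> 0 \<and> dw p q \<ge> 0) \<and>
         (m = 3 \<longrightarrow> du p q \<ge> 0 \<and> dv p q \<le> 0 \<and> dw p q \<ge> 0) \<and>
         (m = 4 \<longrightarrow> du p q \<le> 0 \<and> dv p q \<le> 0 \<and> dw p q \<ge> 0) \<and>
         (m = 5 \<longrightarrow> du p q \<le> 0 \<and> dv p q \<le> 0 \<and> dw p q \<le> 0) \<and>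
         (m = 6 \<longrightarrow> du p q \<le> 0 \<and> dv p q \<ge> 0 \<and> dw p q \<le> 0)"
    (is "(_ \<longrightarrow> ?c1) \<and> (_ \<longrightarrow> ?c2) \<and> (_ \<longrightarrow> ?c3) \<and> (_ \<longrightarrow> ?c4) \<and> (_ \<longrightarrow> ?c5) \<and> (_ \<longrightarrow> ?c6)")
proof -
  obtain r \<theta> where h: "r \<ge> 0" "(real m - 1) * pi / 3 \<le> \<theta>" "\<theta> \<le> real m * pi / 3"
     "du p q = r * sin \<theta>" "dv p q = 2 * r * sin (\<theta> + pi/3)" "dw p q = 2 * r * sin (\<theta> - pi/3)"
    using cone_polar[OF assms] unfolding du_def dv_def dw_def by blast
  have pp: "pi > 0" by simp
  have c1: "m = 1 \<Longrightarrow> ?c1"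
  proof -
    assume mm: "m = 1"
    have b: "0 * pi / 3 \<le> \<theta>" "\<theta> \<le> 1 * pi / 3" using h(2,3) mm by auto
    show ?c1 unfolding h(4-6)
      by (intro conjI mnn1[OF h(1) sge1] mnn[OF h(1) sge1] mnp[OF h(1) sle1]; use b pp in linarith)
  qed
  have c2: "m = 2 \<Longrightarrow> ?c2"
  proof -
    assume mm: "m = 2"
    have b: "1 * pi / 3 \<le> \<theta>" "\<theta> \<le> 2 * pi / 3" using h(2,3) mm by auto
    show ?c2 unfolding h(4-6)
      by (intro conjI mnn1[OF h(1) sge1] mnn[OF h(1) sge1] mnn[OF h(1) sge1]; use b pp in linarith)
  qed
  have c3: "m = 3 \<Longrightarrow> ?c3"
  proof -
    assume mm: "m = 3"
    have b: "2 * pi / 3 \<le> \<theta>" "\<theta> \<le> 3 * pi / 3" using h(2,3) mm by auto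
    show ?c3 unfolding h(4-6)
      by (intro conjI mnn1[OF h(1) sge1] mnp[OF h(1) sle2] mnn[OF h(1) sge1]; use b pp in linarith)
  qed
  have c4: "m = 4 \<Longrightarrow> ?c4"
  proof -
    assume mm: "m = 4"
    have b: "3 * pi / 3 \<le> \<theta>" "\<theta> \<le> 4 * pi / 3" using h(2,3) mm by auto
    show ?c4 unfolding h(4-6)
      by (intro conjI mnp1[OF h(1) sle2] mnp[OF h(1) sle2] mnn[OF h(1) sge1]; use b pp in linarith)
  qed
  have c5: "m = 5 \<Longrightarrow> ?c5"
  proof -
    assume mm: "m = 5"
    have b: "4 * pi / 3 \<le> \<theta>" "\<theta> \<le> 5 * pi / 3" using h(2,3) mm by auto
    show ?c5 unfolding h(4-6)
      by (intro conjI mnp1[OF h(1) sle2] mnp[OF h(1) sle2] mnp[OF h(1) sle2]; use b pp in linarith)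
  qed
  have c6: "m = 6 \<Longrightarrow> ?c6"
  proof -
    assume mm: "m = 6"
    have b: "5 * pi / 3 \<le> \<theta>" "\<theta> \<le> 6 * pi / 3" using h(2,3) mm by auto
    show ?c6 unfolding h(4-6)
      by (intro conjI mnp1[OF h(1) sle2] mnn[OF h(1) sge2] mnp[OF h(1) sle2]; use b pp in linarith)
  qed
  show ?thesis using c1 c2 c3 c4 c5 c6 by blast
qed


lemma cone_exists:
  assumes "q \<noteq> p"
  shows "\<exists>m\<in>{1,2,3,4,5,6::nat}. q \<in> cone_A m p"
proof -
  define dx where "dx = fst q - fst p"
  define dy where "dy = snd q - snd p"
  define r where "r = sqrt (dx^2 + dy^2)"
  have "dx \<noteq> 0 \<or> dy \<noteq> 0" using assms unfolding dx_def dy_def by (auto simp: prod_eq_iff)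
  then have pos: "dx^2 + dy^2 > 0" by (simp add: sum_power2_gt_zero_iff)
  then have r: "r > 0" unfolding r_def by simp
  have r2: "r^2 = dx^2 + dy^2" unfolding r_def using pos by simp
  have "(dx/r)^2 + (dy/r)^2 = (dx^2 + dy^2) / r^2" by (simp add: power_divide add_divide_distrib)
  then have "(dx/r)^2 + (dy/r)^2 = 1" using r2 pos r by (simp add: sum_power2_gt_zero_iff)
  then obtain t where t: "0 \<le> t" "t \<le> 2*pi" "dx/r = cos t" "dy/r = sin t"
    using sincos_total_2pi_le by blast
  have qe: "q = (fst p + r * cos t, snd p + r * sin t)"
    using t(3,4) r unfolding dx_def dy_def by (auto simp: prod_eq_iff field_simps)
  have "\<exists>m\<in>{1,2,3,4,5,6::nat}. (real m - 1) * pi / 3 \<le> t \<and> t \<le> real m * pi / 3"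
  proof -
    have "t \<le> 1*pi/3 \<or> (1*pi/3 \<le> t \<and> t \<le> 2*pi/3) \<or> (2*pi/3 \<le> t \<and> t \<le> 3*pi/3) \<or>
          (3*pi/3 \<le> t \<and> t \<le> 4*pi/3) \<or> (4*pi/3 \<le> t \<and> t \<le> 5*pi/3) \<or> (5*pi/3 \<le> t)" by linarith
    then show ?thesis using t(1,2)
      apply (elim disjE)
      subgoal by (rule bexI[of _ 1]) auto
      subgoal by (rule bexI[of _ 2]) auto
      subgoal by (rule bexI[of _ 3]) auto
      subgoal by (rule bexI[of _ 4]) auto
      subgoal by (rule bexI[of _ 5]) auto
      subgoal by (rule bexI[of _ 6]) auto
      done
  qed
  then obtain m where mm: "m\<in>{1,2,3,4,5,6::nat}" "(real m - 1) * pi / 3 \<le> t" "t \<le> real m * pi / 3" by blast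
  have "q \<in> cone_A m p" unfolding cone_A_def mem_Collect_eq
    apply (rule exI[of _ r], rule exI[of _ t])
    using qe r mm(2,3) by simp
  then show ?thesis using mm(1) by blast
qed

definition G :: "nat \<Rightarrow> point \<Rightarrow> real" where
  "G m x = (if m = 1 then F2 x else if m = 2 then F3 x else F1 x)"

lemma Gd: "G 1 q - G 1 p = - dv p q" "G 2 q - G 2 p = - dw p q" "G 3 q - G 3 p = 2 * du p q"
  unfolding G_def F1_def F2_def F3_def du_def dv_def dw_def by (auto simp: algebra_simps)

lemma Gsum: "i \<in> {1,2,3} \<Longrightarrow> j \<in> {1,2,3} \<Longrightarrow> k \<in> {1,2,3} \<Longrightarrow> i \<noteq> j \<Longrightarrow> i \<noteq> k \<Longrightarrow> j \<noteq> k
  \<Longrightarrow> G i x + G j x + G k x = 0"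
  unfolding G_def F1_def F2_def F3_def by auto

lemma gp_d: assumes "general_position P" "p \<in> P" "q \<in> P" "p \<noteq> q"
  shows "du p q \<noteq> 0 \<and> dv p q \<noteq> 0 \<and> dw p q \<noteq> 0"
proof -
  have h: "snd q - snd p \<noteq> 0" "snd q - snd p \<noteq> sqrt 3 * (fst q - fst p)"
     "snd q - snd p \<noteq> - sqrt 3 * (fst q - fst p)"
    using assms unfolding general_position_def by blast+
  have h3: "snd q - snd p \<noteq> - (sqrt 3 * (fst q - fst p))" using h(3) by simp
  show ?thesis unfolding du_def dv_def dw_def using h(1,2) h3 by linarith
qed

lemma gp_G: "general_position P \<Longrightarrow> p \<in> P \<Longrightarrow> q \<in> P \<Longrightarrow> p \<noteq> q \<Longrightarrow> m \<in> {1,2,3} \<Longrightarrow> G m q \<noteq> G m p"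
  using gp_d[of P p q] Gd[of q p] by auto

lemma V_sign: "q \<in> V P m p \<Longrightarrow> m \<in> {1,2,3} \<Longrightarrow> G m q \<le> G m p"
  unfolding V_def cone_C_def using cone_signs[of q "2*m-1" p] Gd[of q p] by auto

lemma Vbar_empty:
  assumes gp: "general_position P" and p: "p \<in> P" and q: "q \<in> P" "q \<noteq> p"
    and e: "Vbar P k p = {}" and k: "k \<in> {1,2,3}"
    and s: "G k q > G k p" "\<forall>l\<in>{1,2,3}. l \<noteq> k \<longrightarrow> G l q < G l p"
  shows False
proof -
  obtain m where m: "m \<in> {1,2,3,4,5,6::nat}" "q \<in> cone_A m p" using cone_exists[OF q(2)] by blast
  have nq: "q \<notin> cone_Cbar k p"
  proof
    assume "q \<in> cone_Cbar k p"
    then have "q \<in> Vbar P k p" using q unfolding Vbar_def by blast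
    then show False using e by blast
  qed
  have d: "du p q \<noteq> 0" "dv p q \<noteq> 0" "dw p q \<noteq> 0" using gp_d[OF gp p q(1)] q(2) by auto
  have ms: "m=1 \<or> m=2 \<or> m=3 \<or> m=4 \<or> m=5 \<or> m=6" using m(1) by auto
  note cs = cone_signs[OF m(2)]
  have s2: "\<And>l. l\<in>{1,2,3} \<Longrightarrow> l \<noteq> k \<Longrightarrow> G l q < G l p" using s(2) by blast
  have kk: "k = 1 \<or> k = 2 \<or> k = 3" using k by auto
  then show False
  proof (elim disjE)
    assume k1: "k = 1"
    have "dv p q < 0" "dw p q > 0" "du p q < 0" using s(1) s2[of 2] s2[of 3] Gd[of q p] k1 by auto
    then have "m = 4" using ms cs by (elim disjE) auto
    then show False using nq m(2) k1 unfolding cone_Cbar_def by simp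
  next
    assume k1: "k = 2"
    have "dv p q > 0" "dw p q < 0" "du p q < 0" using s(1) s2[of 1] s2[of 3] Gd[of q p] k1 by auto
    then have "m = 6" using ms cs by (elim disjE) auto
    then show False using nq m(2) k1 unfolding cone_Cbar_def by simp
  next
    assume k1: "k = 3"
    have "dv p q > 0" "dw p q > 0" "du p q > 0" using s(1) s2[of 1] s2[of 2] Gd[of q p] k1 by auto
    then have "m = 2" using ms cs by (elim disjE) auto
    then show False using nq m(2) k1 unfolding cone_Cbar_def by simp
  qed
qed


lemma tri_F:
  assumes "c1 + c2 + c3 > 0"
  shows "down_triangle {x. F1 x \<le> c1 \<and> F2 x \<le> c2 \<and> F3 x \<le> c3}"
proof -
  define b where "b = c1/2"
  define a where "a = -(c2 + b)/sqrt 3"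
  define s where "s = (c1+c2+c3)/sqrt 3"
  have s: "s > 0" using assms unfolding s_def by simp
  have e1: "2*b = c1" unfolding b_def by simp
  have e2: "-(sqrt 3 * a + b) = c2" unfolding a_def by simp
  have "sqrt 3 * a = -(c2+b)" "sqrt 3 * s = c1+c2+c3" unfolding a_def s_def by simp_all
  then have e3: "sqrt 3 * (a+s) - b = c3" unfolding b_def by (simp add: distrib_left)
  show ?thesis unfolding down_triangle_def
    apply (rule exI[of _ a], rule exI[of _ b], rule exI[of _ s])
    using s tri_eq[OF s, of a b] e1 e2 e3 by simp
qed

lemma tri_G:
  assumes "i \<in> {1,2,3}" "j \<in> {1,2,3}" "k \<in> {1,2,3}" "i \<noteq> j" "i \<noteq> k" "j \<noteq> k"
    and "ci + cj + ck > 0"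
  shows "down_triangle {x. G i x \<le> ci \<and> G j x \<le> cj \<and> G k x \<le> ck}"
proof -
  define c where "c m = (if m = i then ci else if m = j then cj else ck)" for m
  have eq: "{x. G i x \<le> ci \<and> G j x \<le> cj \<and> G k x \<le> ck} = {x. F1 x \<le> c 3 \<and> F2 x \<le> c 1 \<and> F3 x \<le> c 2}"
    using assms(1-6) unfolding c_def G_def by auto
  have "c 3 + c 1 + c 2 > 0" using assms unfolding c_def by auto
  then show ?thesis unfolding eq by (intro tri_F) 
qed

lemma nb:
  assumes fin: "finite P" and gp: "general_position P" and p: "p \<in> P"
    and ijk: "i \<in> {1,2,3}" "j \<in> {1,2,3}" "k \<in> {1,2,3}" "i \<noteq> j" "i \<noteq> k" "j \<noteq> k"
    and no: "\<And>x. x \<in> P \<Longrightarrow> x \<noteq> p \<Longrightarrow> \<not> (G k x > G k p \<and> G i x < G i p \<and> G j x < G j p)"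
    and ex: "\<exists>x\<in>P. G j x < G j p"
  shows "\<exists>q. tri_adj P p q \<and> G j q < G j p \<and> G i q > G i p"
proof -
  define S where "S = {x\<in>P. G j x < G j p}"
  have Sfin: "finite S" using fin unfolding S_def by simp
  have Sne: "S \<noteq> {}" using ex unfolding S_def by blast
  have Sgt: "G i x > G i p" if x: "x \<in> S" for x
  proof -
    have xP: "x \<in> P" and xj: "G j x < G j p" using x unfolding S_def by auto
    have xp: "x \<noteq> p" using xj by auto
    have "G i x \<noteq> G i p" using gp_G[OF gp p xP xp[symmetric] ijk(1)] .
    moreover have "\<not> G i x < G i p"
    proof
      assume a: "G i x < G i p"
      have "G k x > G k p" using Gsum[OF ijk, of x] Gsum[OF ijk, of p] a xj by linarith
      then show False using no[OF xP xp] a xj by blast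
    qed
    ultimately show ?thesis by linarith
  qed
  define t where "t = Min (G i ` S)"
  have "t \<in> G i ` S" unfolding t_def using Sfin Sne by simp
  then obtain q where qS: "q \<in> S" and tq: "t = G i q" by blast
  have tmin: "t \<le> G i x" if "x \<in> S" for x unfolding t_def using Sfin that by simp
  define M where "M = Max (G k ` P)"
  have Mmax: "G k x \<le> M" if "x \<in> P" for x unfolding M_def using fin that by simp
  have qP: "q \<in> P" and qj: "G j q < G j p" using qS unfolding S_def by auto
  have qi: "G i q > G i p" using Sgt[OF qS] .
  have sum: "t + G j p + M > 0"
    using Gsum[OF ijk, of p] Mmax[OF p] qi tq by linarith
  define T where "T = {x. G i x \<le> t \<and> G j x \<le> G j p \<and> G k x \<le> M}"
  have dT: "down_triangle T" unfolding T_def using tri_G[OF ijk sum] .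
  have "T \<inter> P = {p, q}"
  proof
    show "T \<inter> P \<subseteq> {p, q}"
    proof
      fix x assume x: "x \<in> T \<inter> P"
      show "x \<in> {p, q}"
      proof (cases "x = p")
        case False
        have xP: "x \<in> P" and h: "G i x \<le> t" "G j x \<le> G j p" using x unfolding T_def by auto
        have "G j x \<noteq> G j p" using gp_G[OF gp p xP False[symmetric] ijk(2)] .
        then have "x \<in> S" using h xP unfolding S_def by auto
        then have "G i x = G i q" using tmin[of x] h tq by linarith
        then have "x = q" using gp_G[OF gp qP xP _ ijk(1)] by metis
        then show ?thesis by simp
      qed simp
    qed
    show "{p, q} \<subseteq> T \<inter> P"
      using p qP Mmax qi qj tq unfolding T_def by auto
  qed
  moreover have "q \<noteq> p" using qj by auto
  ultimately have "tri_adj P p q" unfolding tri_adj_def using p qP dT by blast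
  then show ?thesis using qi qj by blast
qed

theorem mainTheorem5:
  fixes P :: "point set" and p :: point and i j k :: nat
  assumes "finite P" and "general_position P" and "p \<in> P"
    and "tri_degree P p = 1"
    and "i \<in> {1,2,3}" and "j \<in> {1,2,3}" and "i \<noteq> j"
    and "V P i p \<noteq> {}" and "V P j p \<noteq> {}"
    and "k \<in> {1,2,3}" and "k \<noteq> i" and "k \<noteq> j"
  shows "Vbar P k p \<noteq> {}"
proof
  assume e: "Vbar P k p = {}"
  note fin = assms(1) and gp = assms(2) and p = assms(3)
  have ijk: "i \<in> {1,2,3}" "j \<in> {1,2,3}" "k \<in> {1,2,3}" "i \<noteq> j" "i \<noteq> k" "j \<noteq> k"
    using assms by auto
  have no: "\<not> (G k x > G k p \<and> G i x < G i p \<and> G j x < G j p)" if "x \<in> P" "x \<noteq> p" for x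
  proof
    assume h: "G k x > G k p \<and> G i x < G i p \<and> G j x < G j p"
    have "\<forall>l\<in>{1,2,3}. l \<noteq> k \<longrightarrow> G l x < G l p" using h ijk by auto
    then show False using Vbar_empty[OF gp p that e ijk(3)] h by blast
  qed
  have exV: "\<exists>x\<in>P. G m x < G m p" if ne: "V P m p \<noteq> {}" and mi: "m \<in> {1,2,3}" for m
  proof -
    obtain x where x: "x \<in> V P m p" using ne by blast
    have xP: "x \<in> P" "x \<noteq> p" using x unfolding V_def by auto
    have "G m x \<le> G m p" using V_sign[OF x mi] .
    moreover have "G m x \<noteq> G m p" using gp_G[OF gp p xP(1) xP(2)[symmetric] mi] .
    ultimately show ?thesis using xP by force
  qed
  obtain q1 where q1: "tri_adj P p q1" "G j q1 < G j p" "G i q1 > G i p"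
    using nb[OF fin gp p ijk no exV[OF assms(9) ijk(2)]] by blast
  have ijk': "j \<in> {1,2,3}" "i \<in> {1,2,3}" "k \<in> {1,2,3}" "j \<noteq> i" "j \<noteq> k" "i \<noteq> k"
    using ijk by auto
  obtain q2 where q2: "tri_adj P p q2" "G i q2 < G i p" "G j q2 > G j p"
    using nb[OF fin gp p ijk' _ exV[OF assms(8) ijk(1)]] no by blast
  have ne: "q1 \<noteq> q2" using q1 q2 by auto
  have "finite {q. tri_adj P p q}"
    using fin by (rule finite_subset[rotated]) (auto simp: tri_adj_def)
  then have "card {q1, q2} \<le> card {q. tri_adj P p q}"
    using q1 q2 by (intro card_mono) auto
  then have "2 \<le> tri_degree P p" using ne unfolding tri_degree_def by simp
  then show False using assms(4) by simp
qed

end
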